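(* Let $K$ be an algebraically closed field, $m\ge1$ and $2\le a\le b$ integers, $S=K[[x,y_1,\dots,y_m]]$, $g=g(y_1,\dots,y_m)\in(\underline{y})^b\setminus(\underline{y})^{b+1}$, $A=S/(x^a-g)$, $Q=(y_1,\dots,y_m)A$. Let $d=\gcd(a,b)$, $a'=a/d$, $b'=b/d$, $n_k=\lfloor kb/a\rfloor$ for $k=1,\dots,a-1$, and for $n\ge1$ define \[J_n=Q^n+xQ^{n-n_1}+x^2Q^{n-n_2}+\cdots+x^{a-1}Q^{n-n_{a-1}},\] \[I_n=\big(x^ky_1^{i_1}\cdots y_m^{i_m} : k,i_1,\dots,i_m\in\mathbb{Z}_{\ge0},\ kb'+(i_1+\cdots+i_m)a'\ge n\big)A.\] Then $J_n=I_{na'}$ for every $n\ge1$.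
   Context: $(\underline{y})=(y_1,\dots,y_m)$; by convention $Q^j=A$ for $j\le0$. *)

theory Defs
  imports "HOL-Computational_Algebra.Polynomial" "HOL-Algebra.QuotRing" "HOL-Algebra.Ideal_Product"
begin

text \<open>Formal power series in the variables t_0, ..., t_m over a field K, where
  t_0 plays the role of x and t_1, ..., t_m the role of y_1, ..., y_m.\<close>

definition mono_ok :: "nat \<Rightarrow> (nat \<Rightarrow> nat) \<Rightarrow> bool" where
  "mono_ok m e \<longleftrightarrow> (\<forall>i>m. e i = 0)"

definition pser_ring :: "nat \<Rightarrow> ((nat \<Rightarrow> nat) \<Rightarrow> 'a::field) ring" where
  "pser_ring m =
    \<lparr> carrier = {f. \<forall>e. \<not> mono_ok m e \<longrightarrow> f e = 0},
      mult = (\<lambda>f g e. if mono_ok m e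
                       then (\<Sum>e1\<in>{e1. \<forall>i. e1 i \<le> e i}. f e1 * g (\<lambda>i. e i - e1 i))
                       else 0),
      one = (\<lambda>e. if e = (\<lambda>_. 0) then 1 else 0),
      zero = (\<lambda>_. 0),
      add = (\<lambda>f g e. f e + g e) \<rparr>"

definition pmono :: "(nat \<Rightarrow> nat) \<Rightarrow> (nat \<Rightarrow> nat) \<Rightarrow> 'a::field" where
  "pmono e0 = (\<lambda>e. if e = e0 then 1 else 0)"

definition pvar :: "nat \<Rightarrow> (nat \<Rightarrow> nat) \<Rightarrow> 'a::field" where
  "pvar i = pmono (\<lambda>j. if j = i then 1 else 0)"

fun ideal_pow :: "('a, 'b) ring_scheme \<Rightarrow> 'a set \<Rightarrow> nat \<Rightarrow> 'a set" where
  "ideal_pow R I 0 = carrier R"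
| "ideal_pow R I (Suc n) = ideal_prod R I (ideal_pow R I n)"

definition ideal_ipow :: "('a, 'b) ring_scheme \<Rightarrow> 'a set \<Rightarrow> int \<Rightarrow> 'a set" where
  "ideal_ipow R I j = (if j \<le> 0 then carrier R else ideal_pow R I (nat j))"

end

theory Submission
  imports Defs
begin

definition Dn :: "(nat \<Rightarrow> nat) \<Rightarrow> (nat \<Rightarrow> nat) set" where
  "Dn e = {e1. \<forall>i. e1 i \<le> e i}"

lemma finite_Dn: assumes "mono_ok m e" shows "finite (Dn e)"
proof -
  have "Dn e \<subseteq> {f. \<forall>x. (x \<in> {..m} \<longrightarrow> f x \<in> {..(\<Sum>i\<le>m. e i)}) \<and> (x \<notin> {..m} \<longrightarrow> f x = 0)}"
  proof
    fix f assume "f \<in> Dn e"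
    then have f: "\<And>i. f i \<le> e i" by (auto simp: Dn_def)
    have "f x \<le> (\<Sum>i\<le>m. e i)" if "x \<le> m" for x
      using f[of x] member_le_sum[of x "{..m}" e] that by auto
    moreover have "f x = 0" if "x > m" for x using f[of x] assms that by (auto simp: mono_ok_def)
    ultimately show "f \<in> {f. \<forall>x. (x \<in> {..m} \<longrightarrow> f x \<in> {..(\<Sum>i\<le>m. e i)}) \<and> (x \<notin> {..m} \<longrightarrow> f x = 0)}"
      by auto
  qed
  then show ?thesis by (rule finite_subset) (rule finite_set_of_finite_funs; simp)
qed

lemma Dn_mono_ok: "mono_ok m e \<Longrightarrow> e1 \<in> Dn e \<Longrightarrow> mono_ok m e1"
  by (auto simp: mono_ok_def Dn_def) (metis le_zero_eq)

lemma diff_mono_ok: "mono_ok m e \<Longrightarrow> mono_ok m (\<lambda>i. e i - e1 i)"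
  by (auto simp: mono_ok_def)

lemma S_mult: "(f \<otimes>\<^bsub>pser_ring m\<^esub> g) e = (if mono_ok m e then (\<Sum>e1\<in>Dn e. f e1 * g (\<lambda>i. e i - e1 i)) else 0)"
  by (simp add: pser_ring_def Dn_def)

lemma S_add: "(f \<oplus>\<^bsub>pser_ring m\<^esub> g) = (\<lambda>e. f e + g e)"
  by (simp add: pser_ring_def)

lemma S_zero: "\<zero>\<^bsub>pser_ring m\<^esub> = (\<lambda>_. 0)"
  by (simp add: pser_ring_def)

lemma S_one: "\<one>\<^bsub>pser_ring m\<^esub> = (\<lambda>e. if e = (\<lambda>_. 0) then 1 else 0)"
  by (simp add: pser_ring_def)

lemma S_carrier: "f \<in> carrier (pser_ring m) \<longleftrightarrow> (\<forall>e. \<not> mono_ok m e \<longrightarrow> f e = 0)"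
  by (simp add: pser_ring_def)

lemma conv_assoc:
  fixes f g h :: "(nat \<Rightarrow> nat) \<Rightarrow> 'a::field"
  assumes "mono_ok m e"
  shows "(\<Sum>e1\<in>Dn e. (\<Sum>e2\<in>Dn e1. f e2 * g (\<lambda>i. e1 i - e2 i)) * h (\<lambda>i. e i - e1 i))
       = (\<Sum>e2\<in>Dn e. f e2 * (\<Sum>e3\<in>Dn (\<lambda>i. e i - e2 i). g e3 * h (\<lambda>i. e i - e2 i - e3 i)))"
proof -
  have fin1: "finite (Dn e1)" if "e1 \<in> Dn e" for e1 using finite_Dn[OF Dn_mono_ok[OF assms that]] .
  have fin2: "finite (Dn (\<lambda>i. e i - e2 i))" for e2 using finite_Dn[OF diff_mono_ok[OF assms]] .
  have "(\<Sum>e1\<in>Dn e. (\<Sum>e2\<in>Dn e1. f e2 * g (\<lambda>i. e1 i - e2 i)) * h (\<lambda>i. e i - e1 i))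
      = (\<Sum>e1\<in>Dn e. \<Sum>e2\<in>Dn e1. f e2 * g (\<lambda>i. e1 i - e2 i) * h (\<lambda>i. e i - e1 i))"
    by (simp add: sum_distrib_right)
  also have "\<dots> = (\<Sum>(e1,e2)\<in>Sigma (Dn e) Dn. f e2 * g (\<lambda>i. e1 i - e2 i) * h (\<lambda>i. e i - e1 i))"
    by (subst sum.Sigma) (use fin1 finite_Dn[OF assms] in auto)
  also have "\<dots> = (\<Sum>(e2,e3)\<in>Sigma (Dn e) (\<lambda>e2. Dn (\<lambda>i. e i - e2 i)). f e2 * g e3 * h (\<lambda>i. e i - e2 i - e3 i))"
  proof (rule sum.reindex_bij_witness[where i = "\<lambda>q. (\<lambda>i. fst q i + snd q i, fst q)"
                                       and j = "\<lambda>p. (snd p, \<lambda>i. fst p i - snd p i)"])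
    fix a assume "a \<in> Sigma (Dn e) Dn"
    then show "(snd a, \<lambda>i. fst a i - snd a i) \<in> (SIGMA e2:Dn e. Dn (\<lambda>i. e i - e2 i))"
      by (auto simp: Dn_def) (meson order.trans, meson diff_le_mono)
  next
    fix a assume "a \<in> Sigma (Dn e) Dn"
    then show "(case (snd a, \<lambda>i. fst a i - snd a i) of
          (e2, e3) \<Rightarrow> f e2 * g e3 * h (\<lambda>i. e i - e2 i - e3 i)) =
         (case a of
          (e1, e2) \<Rightarrow> f e2 * g (\<lambda>i. e1 i - e2 i) * h (\<lambda>i. e i - e1 i))"
      by (auto simp: Dn_def intro!: arg_cong[where f=h] ext)
  qed (auto simp: Dn_def le_diff_conv2 add.commute)
  also have "\<dots> = (\<Sum>e2\<in>Dn e. \<Sum>e3\<in>Dn (\<lambda>i. e i - e2 i). f e2 * g e3 * h (\<lambda>i. e i - e2 i - e3 i))"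
    by (subst sum.Sigma) (use fin2 finite_Dn[OF assms] in auto)
  also have "\<dots> = (\<Sum>e2\<in>Dn e. f e2 * (\<Sum>e3\<in>Dn (\<lambda>i. e i - e2 i). g e3 * h (\<lambda>i. e i - e2 i - e3 i)))"
    by (simp add: sum_distrib_left mult.assoc)
  finally show ?thesis .
qed

lemma conv_comm:
  fixes f g :: "(nat \<Rightarrow> nat) \<Rightarrow> 'a::field"
  shows "(\<Sum>e1\<in>Dn e. f e1 * g (\<lambda>i. e i - e1 i)) = (\<Sum>e1\<in>Dn e. g e1 * f (\<lambda>i. e i - e1 i))"
proof (rule sum.reindex_bij_witness[where i = "\<lambda>e1 i. e i - e1 i" and j = "\<lambda>e1 i. e i - e1 i"])
qed (auto simp: Dn_def mult.commute intro!: ext arg_cong[where f=f] arg_cong[where f=g])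

lemma conv_one:
  fixes f :: "(nat \<Rightarrow> nat) \<Rightarrow> 'a::field"
  assumes "mono_ok m e"
  shows "(\<Sum>e1\<in>Dn e. (if e1 = (\<lambda>_. 0) then 1 else 0) * f (\<lambda>i. e i - e1 i)) = f e"
proof -
  have "(\<lambda>_. 0) \<in> Dn e" by (simp add: Dn_def)
  then have "(\<Sum>e1\<in>Dn e. (if e1 = (\<lambda>_. 0) then 1 else 0) * f (\<lambda>i. e i - e1 i)) = f (\<lambda>i. e i - 0)"
  proof -
    have "(\<Sum>e1\<in>Dn e. (if e1 = (\<lambda>_. 0) then 1 else 0) * f (\<lambda>i. e i - e1 i))
        = (\<Sum>e1\<in>Dn e. (if e1 = (\<lambda>_. 0) then f (\<lambda>i. e i - e1 i) else 0))"
      by (rule sum.cong) auto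
    also have "\<dots> = f (\<lambda>i. e i - 0)" using \<open>(\<lambda>_. 0) \<in> Dn e\<close> by (subst sum.delta[OF finite_Dn[OF assms]]) simp
    finally show ?thesis .
  qed
  then show ?thesis by simp
qed

lemma S_cring: "cring (pser_ring m :: ((nat \<Rightarrow> nat) \<Rightarrow> 'a::field) ring)"
proof -
  let ?S = "pser_ring m :: ((nat \<Rightarrow> nat) \<Rightarrow> 'a::field) ring"
  have ag: "abelian_group ?S"
  proof (rule abelian_groupI)
    fix x assume x: "x \<in> carrier ?S"
    show "\<exists>y\<in>carrier ?S. y \<oplus>\<^bsub>?S\<^esub> x = \<zero>\<^bsub>?S\<^esub>"
      by (rule bexI[where x="\<lambda>e. - x e"]) (use x in \<open>auto simp: S_add S_zero S_carrier\<close>)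
  qed (auto simp: S_add S_zero S_carrier add.assoc add.commute)
  have mc: "x \<otimes>\<^bsub>?S\<^esub> y \<in> carrier ?S" for x y by (simp add: S_carrier S_mult)
  have cm: "comm_monoid ?S"
  proof (rule comm_monoidI)
    show "\<one>\<^bsub>?S\<^esub> \<in> carrier ?S" by (auto simp: S_carrier S_one mono_ok_def)
  next
    fix x y z assume x: "x \<in> carrier ?S" and y: "y \<in> carrier ?S" and z: "z \<in> carrier ?S"
    show "x \<otimes>\<^bsub>?S\<^esub> y \<otimes>\<^bsub>?S\<^esub> z = x \<otimes>\<^bsub>?S\<^esub> (y \<otimes>\<^bsub>?S\<^esub> z)"
    proof
      fix e
      show "(x \<otimes>\<^bsub>?S\<^esub> y \<otimes>\<^bsub>?S\<^esub> z) e = (x \<otimes>\<^bsub>?S\<^esub> (y \<otimes>\<^bsub>?S\<^esub> z)) e"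
      proof (cases "mono_ok m e")
        case True
        have "(x \<otimes>\<^bsub>?S\<^esub> y \<otimes>\<^bsub>?S\<^esub> z) e = (\<Sum>e1\<in>Dn e. (\<Sum>e2\<in>Dn e1. x e2 * y (\<lambda>i. e1 i - e2 i)) * z (\<lambda>i. e i - e1 i))"
          using True by (auto simp: S_mult Dn_mono_ok intro!: sum.cong)
        also have "\<dots> = (\<Sum>e2\<in>Dn e. x e2 * (\<Sum>e3\<in>Dn (\<lambda>i. e i - e2 i). y e3 * z (\<lambda>i. e i - e2 i - e3 i)))"
          by (rule conv_assoc[OF True])
        also have "\<dots> = (x \<otimes>\<^bsub>?S\<^esub> (y \<otimes>\<^bsub>?S\<^esub> z)) e"
          using True by (auto simp: S_mult diff_mono_ok intro!: sum.cong)
        finally show ?thesis .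
      qed (simp add: S_mult)
    qed
  next
    fix x assume x: "x \<in> carrier ?S"
    show "\<one>\<^bsub>?S\<^esub> \<otimes>\<^bsub>?S\<^esub> x = x"
    proof
      fix e show "(\<one>\<^bsub>?S\<^esub> \<otimes>\<^bsub>?S\<^esub> x) e = x e"
        using x conv_one[where e=e and f=x and m=m] by (auto simp: S_mult S_one S_carrier)
    qed
  next
    fix x y assume x: "x \<in> carrier ?S" and y: "y \<in> carrier ?S"
    show "x \<otimes>\<^bsub>?S\<^esub> y = y \<otimes>\<^bsub>?S\<^esub> x"
      by (rule ext) (simp add: S_mult conv_comm[of x])
  qed (rule mc)
  show ?thesis
  proof (rule cringI[OF ag cm])
    fix x y z :: "(nat \<Rightarrow> nat) \<Rightarrow> 'a"
    show "(x \<oplus>\<^bsub>?S\<^esub> y) \<otimes>\<^bsub>?S\<^esub> z = x \<otimes>\<^bsub>?S\<^esub> z \<oplus>\<^bsub>?S\<^esub> y \<otimes>\<^bsub>?S\<^esub> z"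
      by (rule ext) (simp add: S_mult S_add distrib_right sum.distrib)
  qed
qed

lemma pmono_carrier: "mono_ok m e \<Longrightarrow> pmono e \<in> carrier (pser_ring m)"
  by (auto simp: S_carrier pmono_def)

lemma pmono_mult:
  assumes e: "mono_ok m e" and e': "mono_ok m e'"
  shows "pmono e \<otimes>\<^bsub>pser_ring m\<^esub> pmono e' = (pmono (\<lambda>i. e i + e' i) :: (nat \<Rightarrow> nat) \<Rightarrow> 'a::field)"
proof (rule ext)
  fix E
  show "(pmono e \<otimes>\<^bsub>pser_ring m\<^esub> pmono e') E = (pmono (\<lambda>i. e i + e' i) :: (nat \<Rightarrow> nat) \<Rightarrow> 'a) E"
  proof (cases "mono_ok m E")
    case True
    have "(pmono e \<otimes>\<^bsub>pser_ring m\<^esub> pmono e') E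
        = (\<Sum>e1\<in>Dn E. if e1 = e then (if (\<lambda>i. E i - e1 i) = e' then 1 else 0 :: 'a) else 0)"
      using True by (auto simp: S_mult pmono_def intro!: sum.cong)
    also have "\<dots> = (if e \<in> Dn E then (if (\<lambda>i. E i - e i) = e' then 1 else 0) else 0)"
      by (rule sum.delta[OF finite_Dn[OF True]])
    also have "\<dots> = (pmono (\<lambda>i. e i + e' i) :: (nat \<Rightarrow> nat) \<Rightarrow> 'a) E"
    proof -
      have "(e \<in> Dn E \<and> (\<lambda>i. E i - e i) = e') \<longleftrightarrow> E = (\<lambda>i. e i + e' i)"
        by (auto simp: Dn_def fun_eq_iff) (metis le_add_diff_inverse)+
      then show ?thesis by (auto simp: pmono_def)
    qed
    finally show ?thesis .
  next
    case False
    then have "E \<noteq> (\<lambda>i. e i + e' i)" using e e' by (auto simp: mono_ok_def)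
    then show ?thesis using False by (simp add: S_mult pmono_def)
  qed
qed

lemma pmono_zero: "pmono (\<lambda>_. 0) = \<one>\<^bsub>pser_ring m\<^esub>"
  by (simp add: pmono_def S_one)

lemma pvar_pow:
  assumes "i \<le> m"
  shows "pvar i [^]\<^bsub>pser_ring m\<^esub> k = (pmono (\<lambda>j. if j = i then k else 0) :: (nat \<Rightarrow> nat) \<Rightarrow> 'a::field)"
proof (induct k)
  case 0
  have "(\<lambda>j. if j = i then 0 else (0::nat)) = (\<lambda>_. 0)" by auto
  then show ?case by (simp add: pmono_def S_one)
next
  case (Suc k)
  have mo: "mono_ok m (\<lambda>j. if j = i then n else 0)" for n using assms by (auto simp: mono_ok_def)
  have "pvar i [^]\<^bsub>pser_ring m\<^esub> Suc k = (pmono (\<lambda>j. if j = i then k else 0) :: (nat \<Rightarrow> nat) \<Rightarrow> 'a) \<otimes>\<^bsub>pser_ring m\<^esub> pmono (\<lambda>j. if j = i then 1 else 0)"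
    using Suc by (simp add: pvar_def)
  also have "\<dots> = pmono (\<lambda>j. (if j = i then k else 0) + (if j = i then 1 else 0))"
    by (rule pmono_mult[OF mo mo])
  also have "(\<lambda>j. (if j = i then k else 0) + (if j = i then 1 else (0::nat))) = (\<lambda>j. if j = i then Suc k else 0)"
    by auto
  finally show ?case .
qed

lemma pvar_pow_mult:
  assumes "i \<le> m" "mono_ok m e"
  shows "pvar i [^]\<^bsub>pser_ring m\<^esub> k \<otimes>\<^bsub>pser_ring m\<^esub> pmono e = (pmono (e(i := e i + k)) :: (nat \<Rightarrow> nat) \<Rightarrow> 'a::field)"
proof -
  have mo: "mono_ok m (\<lambda>j. if j = i then k else 0)" using assms by (auto simp: mono_ok_def)
  have "pvar i [^]\<^bsub>pser_ring m\<^esub> k \<otimes>\<^bsub>pser_ring m\<^esub> pmono e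
      = (pmono (\<lambda>j. if j = i then k else 0) :: (nat \<Rightarrow> nat) \<Rightarrow> 'a) \<otimes>\<^bsub>pser_ring m\<^esub> pmono e"
    by (simp only: pvar_pow[OF assms(1)])
  also have "\<dots> = pmono (\<lambda>j. (if j = i then k else 0) + e j)" by (rule pmono_mult[OF mo assms(2)])
  also have "(\<lambda>j. (if j = i then k else 0) + e j) = e(i := e i + k)" by auto
  finally show ?thesis .
qed

lemma (in cring) idl_mult_sub:
  assumes K: "ideal K R" and G: "G \<subseteq> carrier R" and t: "t \<in> carrier R"
    and gen: "\<And>g. g \<in> G \<Longrightarrow> g \<otimes> t \<in> K" and x: "x \<in> Idl G"
  shows "x \<otimes> t \<in> K"
proof -
  let ?M = "{x \<in> carrier R. x \<otimes> t \<in> K}"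
  have "ideal ?M R"
  proof (rule idealI)
    show "ring R" by (rule ring_axioms)
    show "subgroup ?M (add_monoid R)"
    proof (rule add.subgroupI)
      show "?M \<noteq> {}" using t ideal.Icarr[OF K] additive_subgroup.zero_closed[OF ideal.axioms(1)[OF K]]
        by (auto intro!: exI[of _ \<zero>])
    next
      fix a assume "a \<in> ?M"
      then show "\<ominus> a \<in> ?M"
        using t by (simp add: l_minus additive_subgroup.a_inv_closed[OF ideal.axioms(1)[OF K]])
    next
      fix a b assume "a \<in> ?M" "b \<in> ?M"
      then show "a \<oplus> b \<in> ?M"
        using t by (simp add: l_distr additive_subgroup.a_closed[OF ideal.axioms(1)[OF K]])
    qed auto
  next
    fix a x assume "a \<in> ?M" "x \<in> carrier R"
    then have ac: "a \<in> carrier R" and at: "a \<otimes> t \<in> K" and xc: "x \<in> carrier R" by auto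
    have "(x \<otimes> a) \<otimes> t = x \<otimes> (a \<otimes> t)" using xc ac t by (rule m_assoc)
    moreover have "x \<otimes> (a \<otimes> t) \<in> K" using ideal.I_l_closed[OF K at xc] .
    ultimately show "x \<otimes> a \<in> ?M" using xc ac by simp
  next
    fix a x assume "a \<in> ?M" "x \<in> carrier R"
    then have ac: "a \<in> carrier R" and at: "a \<otimes> t \<in> K" and xc: "x \<in> carrier R" by auto
    have "(a \<otimes> x) \<otimes> t = x \<otimes> (a \<otimes> t)" using xc ac t by (metis m_assoc m_comm)
    moreover have "x \<otimes> (a \<otimes> t) \<in> K" using ideal.I_l_closed[OF K at xc] .
    ultimately show "a \<otimes> x \<in> ?M" using xc ac by simp
  qed
  moreover have "G \<subseteq> ?M" using G gen by auto
  ultimately have "Idl G \<subseteq> ?M" by (rule genideal_minimal)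
  then show ?thesis using x by auto
qed

lemma (in ring) ideal_prod_sub:
  assumes K: "ideal K R" and h: "\<And>i j. i \<in> I \<Longrightarrow> j \<in> J \<Longrightarrow> i \<otimes> j \<in> K"
  shows "ideal_prod R I J \<subseteq> K"
proof
  fix s assume "s \<in> ideal_prod R I J"
  then show "s \<in> K"
    by (induct s rule: ideal_prod.induct) (auto intro: h additive_subgroup.a_closed[OF ideal.axioms(1)[OF K]])
qed

lemma (in ring) ideal_pow_ideal: "ideal I R \<Longrightarrow> ideal (ideal_pow R I n) R"
  by (induct n) (auto intro: oneideal ideal_prod_is_ideal)

lemma (in ring) ideal_pow_Suc_sub: "ideal I R \<Longrightarrow> ideal_pow R I (Suc n) \<subseteq> ideal_pow R I n"
  using ideal_prod_inter[of I "ideal_pow R I n"] ideal_pow_ideal[of I n] by auto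

lemma (in ring) ideal_pow_anti:
  assumes "ideal I R" "n \<le> n'" shows "ideal_pow R I n' \<subseteq> ideal_pow R I n"
  using assms(2)
proof (induct n' rule: dec_induct)
  case (step k) then show ?case using ideal_pow_Suc_sub[OF assms(1), of k] by blast
qed auto

lemma (in cring) ideal_pow_mult:
  assumes I: "ideal I R"
  shows "x \<in> ideal_pow R I i \<Longrightarrow> y \<in> ideal_pow R I j \<Longrightarrow> x \<otimes> y \<in> ideal_pow R I (i + j)"
proof (induct i arbitrary: x)
  case 0
  then show ?case using ideal.I_l_closed[OF ideal_pow_ideal[OF I, of j]] by simp
next
  case (Suc i)
  have yc: "y \<in> carrier R" using Suc.prems(2) ideal.Icarr[OF ideal_pow_ideal[OF I]] by blast
  from Suc.prems(1) have "x \<in> ideal_prod R I (ideal_pow R I i)" by simp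
  then have "x \<otimes> y \<in> ideal_prod R I (ideal_pow R I (i + j))"
  proof (induct x rule: ideal_prod.induct)
    case (prod p q)
    have pc: "p \<in> carrier R" using prod ideal.Icarr[OF I] by blast
    have qc: "q \<in> carrier R" using prod ideal.Icarr[OF ideal_pow_ideal[OF I]] by blast
    have "p \<otimes> q \<otimes> y = p \<otimes> (q \<otimes> y)" using pc qc yc by (simp add: m_assoc)
    then show ?case using Suc.hyps[OF prod(2)] Suc.prems(2) prod(1) by (simp add: ideal_prod.prod)
  next
    case (sum s1 s2)
    have "s1 \<in> carrier R" "s2 \<in> carrier R"
      using sum(1,3) ideal_prod_in_carrier[OF I ideal_pow_ideal[OF I, of i]] by auto
    then have "(s1 \<oplus> s2) \<otimes> y = s1 \<otimes> y \<oplus> s2 \<otimes> y" using yc by (simp add: l_distr)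
    then show ?case using sum by (simp add: ideal_prod.sum)
  qed
  then show ?case by simp
qed

lemma (in cring) ideal_pow_pow:
  assumes I: "ideal I R" and x: "x \<in> ideal_pow R I b"
  shows "x [^] q \<in> ideal_pow R I (q * b)"
proof (induct q)
  case 0 then show ?case by simp
next
  case (Suc q)
  have "x [^] q \<otimes> x \<in> ideal_pow R I (q * b + b)" by (rule ideal_pow_mult[OF I Suc x])
  then show ?case by (simp add: add.commute)
qed

lemma (in ring_hom_ring) ideal_pow_image:
  assumes G: "G \<subseteq> carrier R" and HG: "h ` G \<subseteq> carrier S"
  shows "y \<in> ideal_pow R (Idl\<^bsub>R\<^esub> G) n \<Longrightarrow> h y \<in> ideal_pow S (Idl\<^bsub>S\<^esub> (h ` G)) n"
proof (induct n arbitrary: y)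
  case 0 then show ?case by simp
next
  case (Suc n)
  let ?Q = "Idl\<^bsub>S\<^esub> (h ` G)"
  have Qi: "ideal ?Q S" by (rule S.genideal_ideal[OF HG])
  have QP: "ideal (ideal_pow S ?Q (Suc n)) S" by (rule S.ideal_pow_ideal[OF Qi])
  have "ideal {r \<in> carrier R. h r \<in> ?Q} R" by (rule ideal_vimage[OF Qi])
  moreover have "G \<subseteq> {r \<in> carrier R. h r \<in> ?Q}" using G S.genideal_self[OF HG] by auto
  ultimately have Y1: "Idl G \<subseteq> {r \<in> carrier R. h r \<in> ?Q}" by (rule R.genideal_minimal)
  have "ideal {r \<in> carrier R. h r \<in> ideal_pow S ?Q (Suc n)} R" by (rule ideal_vimage[OF QP])
  then have "ideal_prod R (Idl G) (ideal_pow R (Idl G) n) \<subseteq> {r \<in> carrier R. h r \<in> ideal_pow S ?Q (Suc n)}"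
  proof (rule R.ideal_prod_sub)
    fix i j assume i: "i \<in> Idl G" and j: "j \<in> ideal_pow R (Idl G) n"
    have ic: "i \<in> carrier R" and hi: "h i \<in> ?Q" using Y1 i by auto
    have jc: "j \<in> carrier R"
      by (rule ideal.Icarr[OF R.ideal_pow_ideal[OF R.genideal_ideal[OF G]] j])
    have "h (i \<otimes>\<^bsub>R\<^esub> j) = h i \<otimes>\<^bsub>S\<^esub> h j" using ic jc by (rule hom_mult)
    moreover have "h i \<otimes>\<^bsub>S\<^esub> h j \<in> ideal_pow S ?Q (Suc n)"
      using ideal_prod.prod[OF hi Suc.hyps[OF j]] by simp
    moreover have "i \<otimes>\<^bsub>R\<^esub> j \<in> carrier R" using ic jc by simp
    ultimately show "i \<otimes>\<^bsub>R\<^esub> j \<in> {r \<in> carrier R. h r \<in> ideal_pow S ?Q (Suc n)}"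
      by simp
  qed
  moreover have "y \<in> ideal_prod R (Idl G) (ideal_pow R (Idl G) n)"
    using Suc.prems by (simp only: ideal_pow.simps)
  ultimately have "y \<in> {r \<in> carrier R. h r \<in> ideal_pow S ?Q (Suc n)}" by (rule subsetD)
  then show ?case by (simp only: mem_Collect_eq)
qed

lemma ar_nk: "0 < (d::nat) \<Longrightarrow> k * (b' * d) div (a' * d) = k * b' div a'"
  by (metis div_mult_mult2 mult.assoc not_gr_zero)

lemma ar1: "0 < (a'::nat) \<Longrightarrow> n \<le> k * b' div a' \<Longrightarrow> n * a' \<le> k * b'"
  by (metis div_times_less_eq_dividend le_trans mult_le_mono1)

lemma ar2: "0 < (a'::nat) \<Longrightarrow> n * a' \<le> k * b' + (n - k * b' div a') * a'"
proof -
  assume "0 < a'"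
  have "(k * b' div a') * a' \<le> k * b'" by (simp add: div_times_less_eq_dividend)
  moreover have "n * a' \<le> (k * b' div a') * a' + (n - k * b' div a') * a'"
  proof -
    have "n \<le> k * b' div a' + (n - k * b' div a')" by arith
    then have "n * a' \<le> (k * b' div a' + (n - k * b' div a')) * a'" by (rule mult_le_mono1)
    then show ?thesis by (simp add: add_mult_distrib)
  qed
  ultimately show ?thesis by linarith
qed

lemma ar3:
  fixes a a' b b' e0 q r s n :: nat
  assumes "0 < a'" "n * a' \<le> e0 * b' + s * a'" "a * b' = a' * b" "e0 = q * a + r"
  shows "int n - int (r * b' div a') \<le> int (q * b + s)"
proof (cases "n \<le> q * b + s")
  case True then show ?thesis by linarith
next
  case False
  have "e0 * b' = a' * (q * b) + r * b'" using assms(3,4)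
    by (simp add: algebra_simps)
  then have "n * a' \<le> (q * b + s) * a' + r * b'" using assms(2) by (simp add: algebra_simps)
  then have "(n - (q * b + s)) * a' \<le> r * b'" by (simp add: diff_mult_distrib)
  then have "n - (q * b + s) \<le> r * b' div a'" using assms(1) by (simp add: less_eq_div_iff_mult_less_eq)
  then show ?thesis using False by linarith
qed

theorem proposition5p1:
  fixes m a b :: nat
    and g :: "(nat \<Rightarrow> nat) \<Rightarrow> 'k::alg_closed_field"
  defines "S \<equiv> (pser_ring m :: ((nat \<Rightarrow> nat) \<Rightarrow> 'k) ring)"
  defines "Y \<equiv> genideal S (pvar ` {1..m})"
  defines "F \<equiv> genideal S {pvar 0 [^]\<^bsub>S\<^esub> a \<ominus>\<^bsub>S\<^esub> g}"
  defines "A \<equiv> S Quot F"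
  defines "cls \<equiv> (\<lambda>s. F +>\<^bsub>S\<^esub> s)"
  defines "Q \<equiv> genideal A ((\<lambda>i. cls (pvar i)) ` {1..m})"
  defines "d \<equiv> gcd a b"
  defines "a' \<equiv> a div d"
  defines "b' \<equiv> b div d"
  defines "nk \<equiv> (\<lambda>k::nat. (k * b) div a)"
  defines "J \<equiv> (\<lambda>n::nat. genideal A
              (\<Union>k\<in>{0..<a}. (\<lambda>q. cls (pvar 0) [^]\<^bsub>A\<^esub> k \<otimes>\<^bsub>A\<^esub> q) `
                              ideal_ipow A Q (int n - int (nk k))))"
  defines "I \<equiv> (\<lambda>n::nat. genideal A
              {cls (pmono e) | e. mono_ok m e \<and> e 0 * b' + (\<Sum>i\<in>{1..m}. e i) * a' \<ge> n})"
  assumes "m \<ge> 1" and "2 \<le> a" and "a \<le> b"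
    and "g \<in> carrier S"
    and "\<forall>e. e 0 \<noteq> 0 \<longrightarrow> g e = 0"
    and "g \<in> ideal_pow S Y b" and "g \<notin> ideal_pow S Y (Suc b)"
  shows "\<forall>n\<ge>1. J n = I (n * a')"
proof -
  have Scr: "cring S" unfolding S_def by (rule S_cring)
  interpret S: cring S by (rule Scr)
  have pv: "pvar i \<in> carrier S" if "i \<le> m" for i
    using that by (simp add: S_def pvar_def pmono_carrier mono_ok_def)
  have pmc: "pmono e \<in> carrier S" if "mono_ok m e" for e
    using that by (simp add: S_def pmono_carrier)
  have gc: "g \<in> carrier S" by fact
  have gen_c: "pvar 0 [^]\<^bsub>S\<^esub> a \<ominus>\<^bsub>S\<^esub> g \<in> carrier S" using pv[of 0] gc by simp
  have Fi: "ideal F S" unfolding F_def by (rule S.genideal_ideal) (use gen_c in auto)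
  interpret F: ideal F S by (rule Fi)
  have Acr: "cring A" unfolding A_def by (rule F.quotient_is_cring[OF Scr])
  interpret A: cring A by (rule Acr)
  have hom: "ring_hom_ring S A cls" unfolding A_def cls_def by (rule F.rcos_ring_hom_ring)
  interpret h: ring_hom_ring S A cls by (rule hom)
  have dpos: "0 < d" unfolding d_def using \<open>2 \<le> a\<close> by simp
  have aeq: "a = a' * d" unfolding a'_def d_def by simp
  have beq: "b = b' * d" unfolding b'_def d_def by simp
  have a'pos: "0 < a'" using aeq \<open>2 \<le> a\<close> by (cases a') auto
  have abeq: "a * b' = a' * b" using aeq beq by simp
  have nkeq: "nk k = k * b' div a'" for k unfolding nk_def using ar_nk[OF dpos] aeq beq by simp
  define X where "X = cls (pvar 0)"
  have Xc: "X \<in> carrier A" unfolding X_def using pv[of 0] by simp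
  have clsc: "cls (pmono e) \<in> carrier A" if "mono_ok m e" for e using pmc[OF that] by simp
  have Xpow: "X [^]\<^bsub>A\<^esub> k \<otimes>\<^bsub>A\<^esub> cls (pmono e) = cls (pmono (e(0 := e 0 + k)))"
    if "mono_ok m e" for e k
  proof -
    have "X [^]\<^bsub>A\<^esub> k = cls (pvar 0 [^]\<^bsub>S\<^esub> k)" unfolding X_def using pv[of 0] by (simp add: h.hom_nat_pow)
    then have "X [^]\<^bsub>A\<^esub> k \<otimes>\<^bsub>A\<^esub> cls (pmono e) = cls (pvar 0 [^]\<^bsub>S\<^esub> k \<otimes>\<^bsub>S\<^esub> pmono e)"
      using pv[of 0] pmc[OF that] by simp
    also have "pvar 0 [^]\<^bsub>S\<^esub> k \<otimes>\<^bsub>S\<^esub> pmono e = pmono (e(0 := e 0 + k))"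
      unfolding S_def by (rule pvar_pow_mult) (use that in auto)
    finally show ?thesis .
  qed
  have Ymul: "cls (pvar i) \<otimes>\<^bsub>A\<^esub> cls (pmono e) = cls (pmono (e(i := e i + 1)))"
    if "i \<in> {1..m}" "mono_ok m e" for i e
  proof -
    have "pvar i \<otimes>\<^bsub>S\<^esub> pmono e = pvar i [^]\<^bsub>S\<^esub> (1::nat) \<otimes>\<^bsub>S\<^esub> pmono e"
      using pv[of i] that by simp
    also have "\<dots> = pmono (e(i := e i + 1))"
      unfolding S_def by (rule pvar_pow_mult) (use that in auto)
    finally show ?thesis using pv[of i] pmc[OF that(2)] that by (simp flip: h.hom_mult)
  qed
  have Xa: "X [^]\<^bsub>A\<^esub> a = cls g"
  proof -
    let ?p = "pvar 0 [^]\<^bsub>S\<^esub> a"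
    have pc: "?p \<in> carrier S" using pv[of 0] by simp
    have "?p \<ominus>\<^bsub>S\<^esub> g \<in> F" unfolding F_def by (rule S.genideal_self[THEN subsetD]) (use gen_c in auto)
    then have z: "cls (?p \<ominus>\<^bsub>S\<^esub> g) = \<zero>\<^bsub>A\<^esub>"
      unfolding cls_def A_def by (simp add: F.a_rcos_const FactRing_def)
    have eq: "?p = (?p \<ominus>\<^bsub>S\<^esub> g) \<oplus>\<^bsub>S\<^esub> g" using pc gc
      by (simp add: S.minus_eq S.a_assoc S.l_neg)
    have "cls ?p = cls ((?p \<ominus>\<^bsub>S\<^esub> g) \<oplus>\<^bsub>S\<^esub> g)" using eq by (rule arg_cong[where f=cls])
    also have "\<dots> = cls (?p \<ominus>\<^bsub>S\<^esub> g) \<oplus>\<^bsub>A\<^esub> cls g" by (rule h.hom_add) (use gen_c gc in auto)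
    also have "\<dots> = cls g" using z gc by simp
    finally show ?thesis unfolding X_def using pv[of 0] by (simp add: h.hom_nat_pow)
  qed
  have Gc: "pvar ` {1..m} \<subseteq> carrier S" using pv by auto
  have HGc: "cls ` pvar ` {1..m} \<subseteq> carrier A" using pv by auto
  have Qeq: "Q = genideal A (cls ` pvar ` {1..m})" unfolding Q_def by (simp add: image_image)
  have Qi: "ideal Q A" unfolding Qeq by (rule A.genideal_ideal[OF HGc])
  have QPi: "ideal (ideal_pow A Q j) A" for j by (rule A.ideal_pow_ideal[OF Qi])
  have QPc: "x \<in> carrier A" if "x \<in> ideal_pow A Q j" for x j using ideal.Icarr[OF QPi that] .
  have Yi_Q: "cls (pvar i) \<in> Q" if "i \<in> {1..m}" for i
    unfolding Q_def using that by (intro A.genideal_self[THEN subsetD]) (use pv in auto)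
  have gQ: "cls g \<in> ideal_pow A Q b"
    unfolding Qeq using h.ideal_pow_image[OF Gc HGc] \<open>g \<in> ideal_pow S Y b\<close> unfolding Y_def by blast
  define I' where "I' j = genideal A {cls (pmono e) | e. mono_ok m e \<and> j \<le> (\<Sum>i\<in>{1..m}. e i)}" for j
  have I'gc: "{cls (pmono e) | e. mono_ok m e \<and> j \<le> (\<Sum>i\<in>{1..m}. e i)} \<subseteq> carrier A" for j
    using clsc by auto
  have I'i: "ideal (I' j) A" for j unfolding I'_def by (rule A.genideal_ideal[OF I'gc])
  have I'g: "cls (pmono e) \<in> I' j" if "mono_ok m e" "j \<le> (\<Sum>i\<in>{1..m}. e i)" for e j
    unfolding I'_def using that by (intro A.genideal_self[OF I'gc, THEN subsetD]) auto
  have Igc: "{cls (pmono e) | e. mono_ok m e \<and> e 0 * b' + (\<Sum>i\<in>{1..m}. e i) * a' \<ge> N} \<subseteq> carrier A" for N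
    using clsc by auto
  have Ii: "ideal (I N) A" for N unfolding I_def by (rule A.genideal_ideal[OF Igc])
  have Ig: "cls (pmono e) \<in> I N" if "mono_ok m e" "e 0 * b' + (\<Sum>i\<in>{1..m}. e i) * a' \<ge> N" for e N
    unfolding I_def using that by (intro A.genideal_self[OF Igc, THEN subsetD]) auto
  have sum_upd: "(\<Sum>i\<in>{1..m}. (e(j := v)) i) = (\<Sum>i\<in>{1..m}. e i) - e j + v" if "j \<in> {1..m}" for e :: "nat \<Rightarrow> nat" and j v
  proof -
    have "(\<Sum>i\<in>{1..m}. (e(j := v)) i) = v + (\<Sum>i\<in>{1..m} - {j}. e i)"
      using that by (simp add: sum.remove)
    moreover have "(\<Sum>i\<in>{1..m}. e i) = e j + (\<Sum>i\<in>{1..m} - {j}. e i)"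
      using that by (simp add: sum.remove)
    ultimately show ?thesis by simp
  qed
  have sum_upd0: "(\<Sum>i\<in>{1..m}. (e(0 := v)) i) = (\<Sum>i\<in>{1..m}. e i)" for e v
    by (rule sum.cong) auto
  have mono_upd: "mono_ok m (e(j := v))" if "mono_ok m e" "j \<le> m" for e j v
    using that by (auto simp: mono_ok_def)
  have "pmono (\<lambda>_. 0) = \<one>\<^bsub>S\<^esub>" unfolding S_def by (rule pmono_zero)
  then have one_eq: "cls (pmono (\<lambda>_. 0)) = \<one>\<^bsub>A\<^esub>" by simp
  have mo0: "mono_ok m (\<lambda>_. 0)" by (simp add: mono_ok_def)
  have QI': "ideal_pow A Q j \<subseteq> I' j" for j
  proof (induct j)
    case 0
    have "\<one>\<^bsub>A\<^esub> \<in> I' 0" using I'g[OF mo0, of 0] one_eq by simp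
    then show ?case using ideal.one_imp_carrier[OF I'i] by simp
  next
    case (Suc j)
    have step: "cls (pvar i) \<otimes>\<^bsub>A\<^esub> p \<in> I' (Suc j)" if i: "i \<in> {1..m}" and p: "p \<in> I' j" for i p
    proof -
      have yc: "cls (pvar i) \<in> carrier A" using pv i by simp
      have pc: "p \<in> carrier A" using ideal.Icarr[OF I'i p] .
      have "p \<otimes>\<^bsub>A\<^esub> cls (pvar i) \<in> I' (Suc j)"
      proof (rule A.idl_mult_sub[OF I'i I'gc yc])
        show "p \<in> Idl\<^bsub>A\<^esub> {cls (pmono e) | e. mono_ok m e \<and> j \<le> (\<Sum>i\<in>{1..m}. e i)}"
          using p unfolding I'_def .
      next
        fix gg assume "gg \<in> {cls (pmono e) | e. mono_ok m e \<and> j \<le> (\<Sum>i\<in>{1..m}. e i)}"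
        then obtain e where e: "mono_ok m e" "j \<le> (\<Sum>i\<in>{1..m}. e i)" and gg: "gg = cls (pmono e)" by auto
        have "gg \<otimes>\<^bsub>A\<^esub> cls (pvar i) = cls (pvar i) \<otimes>\<^bsub>A\<^esub> gg" using yc clsc[OF e(1)] gg by (simp add: A.m_comm)
        also have "\<dots> = cls (pmono (e(i := e i + 1)))" using Ymul[OF i e(1)] gg by simp
        also have "\<dots> \<in> I' (Suc j)"
        proof (rule I'g)
          show "mono_ok m (e(i := e i + 1))" using mono_upd[OF e(1)] i by auto
          have "e i \<le> (\<Sum>i\<in>{1..m}. e i)" using i by (intro member_le_sum) auto
          then show "Suc j \<le> (\<Sum>l\<in>{1..m}. (e(i := e i + 1)) l)" using sum_upd[OF i, of e] e(2) by simp
        qed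
        finally show "gg \<otimes>\<^bsub>A\<^esub> cls (pvar i) \<in> I' (Suc j)" .
      qed
      then show ?thesis using yc pc by (simp add: A.m_comm)
    qed
    have "ideal_prod A Q (ideal_pow A Q j) \<subseteq> I' (Suc j)"
    proof (rule A.ideal_prod_sub[OF I'i])
      fix q p assume q: "q \<in> Q" and p: "p \<in> ideal_pow A Q j"
      have p': "p \<in> I' j" using Suc p by blast
      have pc: "p \<in> carrier A" using QPc[OF p] .
      show "q \<otimes>\<^bsub>A\<^esub> p \<in> I' (Suc j)"
      proof (rule A.idl_mult_sub[OF I'i _ pc])
        show "cls ` pvar ` {1..m} \<subseteq> carrier A" by (rule HGc)
        show "q \<in> Idl\<^bsub>A\<^esub> (cls ` pvar ` {1..m})" using q Qeq by simp
      next
        fix gg assume "gg \<in> cls ` pvar ` {1..m}"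
        then obtain i where "i \<in> {1..m}" "gg = cls (pvar i)" by auto
        then show "gg \<otimes>\<^bsub>A\<^esub> p \<in> I' (Suc j)" using step p' by simp
      qed
    qed
    then show ?case by simp
  qed
  have XI': "X [^]\<^bsub>A\<^esub> k \<otimes>\<^bsub>A\<^esub> t \<in> I N" if N: "N \<le> k * b' + j * a'" and t: "t \<in> I' j" for N k j t
  proof -
    have xc: "X [^]\<^bsub>A\<^esub> k \<in> carrier A" using Xc by simp
    have tc: "t \<in> carrier A" using ideal.Icarr[OF I'i t] .
    have "t \<otimes>\<^bsub>A\<^esub> X [^]\<^bsub>A\<^esub> k \<in> I N"
    proof (rule A.idl_mult_sub[OF Ii I'gc xc])
      show "t \<in> Idl\<^bsub>A\<^esub> {cls (pmono e) | e. mono_ok m e \<and> j \<le> (\<Sum>i\<in>{1..m}. e i)}"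
        using t unfolding I'_def .
    next
      fix gg assume "gg \<in> {cls (pmono e) | e. mono_ok m e \<and> j \<le> (\<Sum>i\<in>{1..m}. e i)}"
      then obtain e where e: "mono_ok m e" "j \<le> (\<Sum>i\<in>{1..m}. e i)" and gg: "gg = cls (pmono e)" by auto
      have "gg \<otimes>\<^bsub>A\<^esub> X [^]\<^bsub>A\<^esub> k = X [^]\<^bsub>A\<^esub> k \<otimes>\<^bsub>A\<^esub> gg" using xc clsc[OF e(1)] gg by (simp add: A.m_comm)
      also have "\<dots> = cls (pmono (e(0 := e 0 + k)))" using Xpow[OF e(1)] gg by simp
      also have "\<dots> \<in> I N"
      proof (rule Ig)
        show "mono_ok m (e(0 := e 0 + k))" using mono_upd[OF e(1)] by auto
        have hh: "j * a' \<le> (\<Sum>i\<in>{1..m}. e i) * a'" using e(2) by (rule mult_le_mono1)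
        have s0: "(\<Sum>l\<in>{1..m}. (e(0 := e 0 + k)) l) = (\<Sum>l\<in>{1..m}. e l)" by (rule sum_upd0)
        show "N \<le> (e(0 := e 0 + k)) 0 * b' + (\<Sum>i\<in>{1..m}. (e(0 := e 0 + k)) i) * a'"
          unfolding s0 fun_upd_same add_mult_distrib using N hh by linarith
      qed
      finally show "gg \<otimes>\<^bsub>A\<^esub> X [^]\<^bsub>A\<^esub> k \<in> I N" .
    qed
    then show ?thesis using xc tc by (simp add: A.m_comm)
  qed
  have Ymono: "\<And>e. mono_ok m e \<Longrightarrow> e 0 = 0 \<Longrightarrow> (\<Sum>i\<in>{1..m}. e i) = s \<Longrightarrow> cls (pmono e) \<in> ideal_pow A Q s" for s
  proof (induct s)
    case 0
    then show ?case using clsc by simp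
  next
    case (Suc s e)
    have "\<exists>i\<in>{1..m}. e i \<noteq> 0"
    proof (rule ccontr)
      assume "\<not> ?thesis"
      then have "(\<Sum>i\<in>{1..m}. e i) = 0" by simp
      then show False using Suc.prems(3) by simp
    qed
    then obtain i where i: "i \<in> {1..m}" and ei: "e i \<noteq> 0" by blast
    define e' where "e' = e(i := e i - 1)"
    have mo': "mono_ok m e'" unfolding e'_def using mono_upd[OF Suc.prems(1)] i by auto
    have e'0: "e' 0 = 0" unfolding e'_def using i Suc.prems(2) by auto
    have "e i \<le> (\<Sum>i\<in>{1..m}. e i)" using i by (intro member_le_sum) auto
    then have se': "(\<Sum>i\<in>{1..m}. e' i) = s" unfolding e'_def using sum_upd[OF i, of e] Suc.prems(3) ei by simp
    have ee: "e'(i := e' i + 1) = e" unfolding e'_def using ei by auto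
    have "cls (pmono e) = cls (pvar i) \<otimes>\<^bsub>A\<^esub> cls (pmono e')" using Ymul[OF i mo'] ee by simp
    moreover have "cls (pvar i) \<otimes>\<^bsub>A\<^esub> cls (pmono e') \<in> ideal_prod A Q (ideal_pow A Q s)"
      by (rule ideal_prod.prod[OF Yi_Q[OF i] Suc.hyps[OF mo' e'0 se']])
    ultimately show ?case by simp
  qed
  show "\<forall>n\<ge>1. J n = I (n * a')"
  proof (intro allI impI)
    fix n :: nat assume "1 \<le> n"
    define JG where "JG = (\<Union>k\<in>{0..<a}. (\<lambda>q. X [^]\<^bsub>A\<^esub> k \<otimes>\<^bsub>A\<^esub> q) ` ideal_ipow A Q (int n - int (nk k)))"
    have Jn: "J n = genideal A JG" unfolding J_def JG_def X_def by simp
    have ipc: "ideal_ipow A Q z \<subseteq> carrier A" for z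
      unfolding ideal_ipow_def using QPc by auto
    have JGc: "JG \<subseteq> carrier A" unfolding JG_def using ipc Xc by auto
    have Ji: "ideal (J n) A" unfolding Jn by (rule A.genideal_ideal[OF JGc])
    show "J n = I (n * a')"
    proof (rule equalityI)
      show "J n \<subseteq> I (n * a')" unfolding Jn
      proof (rule A.genideal_minimal[OF Ii], rule subsetI)
        fix y assume "y \<in> JG"
        then obtain k q where k: "k < a" and q: "q \<in> ideal_ipow A Q (int n - int (nk k))"
          and y: "y = X [^]\<^bsub>A\<^esub> k \<otimes>\<^bsub>A\<^esub> q" unfolding JG_def by auto
        show "y \<in> I (n * a')"
        proof (cases "int n - int (nk k) \<le> 0")
          case True
          then have qc: "q \<in> carrier A" using q by (simp add: ideal_ipow_def)
          have "n \<le> k * b' div a'" using True nkeq[of k] by simp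
          then have le: "n * a' \<le> k * b'" by (rule ar1[OF a'pos])
          have "X [^]\<^bsub>A\<^esub> k = X [^]\<^bsub>A\<^esub> k \<otimes>\<^bsub>A\<^esub> cls (pmono (\<lambda>_. 0))" using Xc one_eq by simp
          also have "\<dots> = cls (pmono ((\<lambda>_. 0)(0 := 0 + k)))" by (rule Xpow[OF mo0])
          also have "\<dots> \<in> I (n * a')"
            by (rule Ig) (use le mono_upd[OF mo0] in auto)
          finally have "X [^]\<^bsub>A\<^esub> k \<in> I (n * a')" .
          then show ?thesis using y qc by (simp add: ideal.I_r_closed[OF Ii])
        next
          case False
          then have "q \<in> ideal_pow A Q (n - nk k)" using q by (simp add: ideal_ipow_def nat_diff_distrib)
          then have "q \<in> I' (n - nk k)" using QI' by blast
          moreover have "n * a' \<le> k * b' + (n - nk k) * a'" using ar2[OF a'pos] nkeq by simp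
          ultimately show ?thesis using y XI' by blast
        qed
      qed
    next
      show "I (n * a') \<subseteq> J n" unfolding I_def
      proof (rule A.genideal_minimal[OF Ji], rule subsetI)
        fix y assume "y \<in> {cls (pmono e) | e. mono_ok m e \<and> e 0 * b' + (\<Sum>i\<in>{1..m}. e i) * a' \<ge> n * a'}"
        then obtain e where e: "mono_ok m e" and ine: "n * a' \<le> e 0 * b' + (\<Sum>i\<in>{1..m}. e i) * a'"
          and y: "y = cls (pmono e)" by auto
        define s where "s = (\<Sum>i\<in>{1..m}. e i)"
        define q where "q = e 0 div a"
        define r where "r = e 0 mod a"
        have e0: "e 0 = q * a + r" unfolding q_def r_def by simp
        have ra: "r < a" unfolding r_def using \<open>2 \<le> a\<close> by simp
        define ey where "ey = e(0 := 0)"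
        have moy: "mono_ok m ey" unfolding ey_def using mono_upd[OF e] by simp
        have ey0: "ey 0 = 0" unfolding ey_def by simp
        have sy: "(\<Sum>i\<in>{1..m}. ey i) = s" unfolding ey_def s_def by (rule sum_upd0)
        have eey: "ey(0 := ey 0 + e 0) = e" unfolding ey_def by auto
        have yc: "cls (pmono ey) \<in> carrier A" by (rule clsc[OF moy])
        have cgc: "cls g \<in> carrier A" using gc by simp
        have "y = X [^]\<^bsub>A\<^esub> (e 0) \<otimes>\<^bsub>A\<^esub> cls (pmono ey)" using Xpow[OF moy, of "e 0"] eey y by simp
        also have "X [^]\<^bsub>A\<^esub> (e 0) = X [^]\<^bsub>A\<^esub> r \<otimes>\<^bsub>A\<^esub> (X [^]\<^bsub>A\<^esub> a) [^]\<^bsub>A\<^esub> q"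
          using Xc e0 by (simp add: A.nat_pow_mult A.nat_pow_pow add.commute mult.commute)
        finally have y2: "y = X [^]\<^bsub>A\<^esub> r \<otimes>\<^bsub>A\<^esub> (cls g [^]\<^bsub>A\<^esub> q \<otimes>\<^bsub>A\<^esub> cls (pmono ey))"
          using Xa Xc yc cgc by (simp add: A.m_assoc)
        have "cls g [^]\<^bsub>A\<^esub> q \<in> ideal_pow A Q (q * b)" by (rule A.ideal_pow_pow[OF Qi gQ])
        then have z: "cls g [^]\<^bsub>A\<^esub> q \<otimes>\<^bsub>A\<^esub> cls (pmono ey) \<in> ideal_pow A Q (q * b + s)"
          using A.ideal_pow_mult[OF Qi _ Ymono[OF moy ey0 sy]] by blast
        have "int n - int (r * b' div a') \<le> int (q * b + s)"
          by (rule ar3[OF a'pos _ abeq e0]) (use ine s_def in simp)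
        then have z2: "cls g [^]\<^bsub>A\<^esub> q \<otimes>\<^bsub>A\<^esub> cls (pmono ey) \<in> ideal_ipow A Q (int n - int (nk r))"
        proof (cases "int n - int (nk r) \<le> 0")
          case True then show ?thesis using QPc[OF z] by (simp add: ideal_ipow_def)
        next
          case False
          assume le: "int n - int (r * b' div a') \<le> int (q * b + s)"
          have "nat (int n - int (nk r)) \<le> q * b + s" unfolding nkeq[of r] nat_le_iff using le .
          then have "ideal_pow A Q (q * b + s) \<subseteq> ideal_pow A Q (nat (int n - int (nk r)))"
            by (rule A.ideal_pow_anti[OF Qi])
          then have "cls g [^]\<^bsub>A\<^esub> q \<otimes>\<^bsub>A\<^esub> cls (pmono ey) \<in> ideal_pow A Q (nat (int n - int (nk r)))"
            using z by blast
          then show ?thesis using False by (simp only: ideal_ipow_def if_False)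
        qed
        have "y \<in> JG" unfolding JG_def using ra z2 y2 by auto
        then show "y \<in> J n" unfolding Jn using A.genideal_self[OF JGc] by blast
      qed
    qed
  qed
qed

end
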